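(* Let $\{W_n\}_{n\ge0}$ be an Appell monic polynomial sequence with cubic decomposition $W_{3n}(x)=P_n(x^3)+xa^1_{n-1}(x^3)+x^2a^2_{n-1}(x^3)$, $W_{3n+1}(x)=b^1_n(x^3)+xQ_n(x^3)+x^2b^2_{n-1}(x^3)$, $W_{3n+2}(x)=c^1_n(x^3)+xc^2_n(x^3)+x^2R_n(x^3)$ (components as in the context). Let $\mathcal{O}_{0,1,2}=D(I+3xD)(2I+3xD)$, $\mathcal{O}_{2,0,1}=(2I+3xD)D(I+3xD)$, $\mathcal{O}_{1,2,0}=(I+3xD)(2I+3xD)D$. Then for $n\ge1$: $a^2_{n-1}=((n+1)(3n+1)(3n+2))^{-1}\mathcal{O}_{0,1,2}a^2_n$, $b^2_{n-1}=((n+1)(3n+2)(3n+4))^{-1}\mathcal{O}_{0,1,2}b^2_n$, $R_n=((n+1)(3n+4)(3n+5))^{-1}\mathcal{O}_{0,1,2}R_{n+1}$, $a^1_{n-1}=((n+1)(3n+1)(3n+2))^{-1}\mathcal{O}_{2,0,1}a^1_n$, $Q_n=((n+1)(3n+2)(3n+4))^{-1}\mathcal{O}_{2,0,1}Q_{n+1}$, $c^2_{n-1}=(n(3n+1)(3n+2))^{-1}\mathcal{O}_{2,0,1}c^2_n$, $P_n=((n+1)(3n+1)(3n+2))^{-1}\mathcal{O}_{1,2,0}P_{n+1}$, $b^1_{n-1}=(n(3n-1)(3n+1))^{-1}\mathcal{O}_{1,2,0}b^1_n$, $c^1_{n-1}=(n(3n+1)(3n+2))^{-1}\mathcal{O}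_{1,2,0}c^1_n$.
   Context: $\mathcal{P}$ is the space of complex polynomials; $I$ is the identity, $D$ the derivative, $x$ multiplication by $x$, products of operators are compositions. An MPS is a sequence $\{W_n\}_{n\ge0}$ with $W_n$ monic of degree $n$; it is Appell if $DW_{n+1}=(n+1)W_n$ for $n\ge0$. Cubic decomposition: for any MPS there are unique polynomials with the displayed identities for all $n\ge0$, where $\{P_n\},\{Q_n\},\{R_n\}$ are MPSs and $\deg a^1_{n-1},\deg a^2_{n-1},\deg b^2_{n-1}\le n-1$, $\deg b^1_n,\deg c^1_n,\deg c^2_n\le n$, with $a^1_{-1}=a^2_{-1}=b^2_{-1}=0$. *)

theory Defs
  imports "HOL-Computational_Algebra.Polynomial"
begin

definition MPS :: "(nat \<Rightarrow> complex poly) \<Rightarrow> bool" where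
  "MPS W \<longleftrightarrow> (\<forall>n. degree (W n) = n \<and> lead_coeff (W n) = 1)"

definition Appell :: "(nat \<Rightarrow> complex poly) \<Rightarrow> bool" where
  "Appell W \<longleftrightarrow> MPS W \<and> (\<forall>n. pderiv (W (Suc n)) = smult (of_nat (Suc n)) (W n))"

definition cub :: "complex poly \<Rightarrow> complex poly" where
  "cub p = pcompose p (monom 1 3)"

definition theta :: "complex poly \<Rightarrow> complex poly" where
  "theta p = smult 3 (monom 1 1 * pderiv p)"

definition opA :: "complex poly \<Rightarrow> complex poly" where
  "opA p = p + theta p"
definition opB :: "complex poly \<Rightarrow> complex poly" where
  "opB p = smult 2 p + theta p"

definition O012 :: "complex poly \<Rightarrow> complex poly" where
  "O012 p = pderiv (opA (opB p))"
definition O201 :: "complex poly \<Rightarrow> complex poly" where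
  "O201 p = opB (pderiv (opA p))"
definition O120 :: "complex poly \<Rightarrow> complex poly" where
  "O120 p = opA (opB (pderiv p))"

text \<open>Cubic decomposition; a1 m, a2 m, b2 m stand for a^1_m etc. (m \<ge> 0); the
  index -1 components are zero, which is encoded by the separate n = 0 equations.\<close>
definition cubic_decomp ::
  "(nat \<Rightarrow> complex poly) \<Rightarrow> (nat \<Rightarrow> complex poly) \<Rightarrow> (nat \<Rightarrow> complex poly) \<Rightarrow> (nat \<Rightarrow> complex poly)
   \<Rightarrow> (nat \<Rightarrow> complex poly) \<Rightarrow> (nat \<Rightarrow> complex poly) \<Rightarrow> (nat \<Rightarrow> complex poly)
   \<Rightarrow> (nat \<Rightarrow> complex poly) \<Rightarrow> (nat \<Rightarrow> complex poly) \<Rightarrow> (nat \<Rightarrow> complex poly) \<Rightarrow> bool" where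
  "cubic_decomp W P Q R a1 a2 b1 b2 c1 c2 \<longleftrightarrow>
     MPS P \<and> MPS Q \<and> MPS R \<and>
     (\<forall>n. degree (a1 n) \<le> n \<and> degree (a2 n) \<le> n \<and> degree (b2 n) \<le> n \<and>
          degree (b1 n) \<le> n \<and> degree (c1 n) \<le> n \<and> degree (c2 n) \<le> n) \<and>
     W 0 = cub (P 0) \<and>
     W 1 = cub (b1 0) + monom 1 1 * cub (Q 0) \<and>
     (\<forall>n\<ge>1. W (3*n) = cub (P n) + monom 1 1 * cub (a1 (n-1)) + monom 1 2 * cub (a2 (n-1))) \<and>
     (\<forall>n\<ge>1. W (3*n+1) = cub (b1 n) + monom 1 1 * cub (Q n) + monom 1 2 * cub (b2 (n-1))) \<and>
     (\<forall>n. W (3*n+2) = cub (c1 n) + monom 1 1 * cub (c2 n) + monom 1 2 * cub (R n))"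

end

theory Submission
  imports Defs
begin

definition comb :: "complex poly \<Rightarrow> complex poly \<Rightarrow> complex poly \<Rightarrow> complex poly" where
  "comb p0 p1 p2 = cub p0 + monom 1 1 * cub p1 + monom 1 2 * cub p2"

lemma cub_pCons: "cub (pCons a p) = [:a:] + monom 1 3 * cub p"
  by (simp add: cub_def pcompose_pCons)

lemma coeff_cub: "coeff (cub p) k = (if k mod 3 = 0 then coeff p (k div 3) else 0)"
proof (induction p arbitrary: k)
  case 0 then show ?case by (simp add: cub_def)
next
  case (pCons a p)
  show ?case
  proof (cases "k < 3")
    case True then show ?thesis
      by (auto simp: cub_pCons coeff_monom_mult coeff_pCons split: nat.split)
  next
    case False
    then obtain j where k: "k = j + 3" by (metis add.commute le_Suc_ex not_less)
    have "k div 3 = Suc (j div 3)" "k mod 3 = j mod 3" using k by auto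
    then show ?thesis using pCons k by (simp add: cub_pCons coeff_monom_mult coeff_pCons split: nat.split)
  qed
qed

lemma coeff_mc: "coeff (monom 1 j * cub p) m = (if j \<le> m \<and> (m-j) mod 3 = 0 then coeff p ((m-j) div 3) else 0)"
  by (simp add: coeff_monom_mult coeff_cub)

lemma a1: "Suc (Suc (3*m)) mod 3 = (2::nat)" by (induct m) auto
lemma a2: "Suc (3*m) mod 3 = (1::nat)" by (induct m) auto
lemma ar1: "\<not> (1 \<le> 3*k \<and> (3*k-1) mod 3 = (0::nat))" by (cases k; simp add: a1 a2)
lemma ar2: "\<not> (2 \<le> 3*k \<and> (3*k-2) mod 3 = (0::nat))" by (cases k; simp add: a1 a2)
lemma ar3: "\<not> (2 \<le> 3*k+1 \<and> (3*k+1-2) mod 3 = (0::nat))" by (cases k; simp add: a1 a2)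
lemma ar4: "(3*k+1) mod 3 = (1::nat)" "(3*k+2) mod 3 = (2::nat)" "(3*k+2-1) mod 3 = (1::nat)" by (simp_all add: a1 a2)

lemma coeff_comb:
  "coeff (comb p0 p1 p2) (3*k) = coeff p0 k"
  "coeff (comb p0 p1 p2) (3*k+1) = coeff p1 k"
  "coeff (comb p0 p1 p2) (3*k+2) = coeff p2 k"
proof -
  show "coeff (comb p0 p1 p2) (3*k) = coeff p0 k"
    using ar1 ar2 ar3 ar4 by (simp only: comb_def coeff_add coeff_mc coeff_cub if_False) simp
  show "coeff (comb p0 p1 p2) (3*k+1) = coeff p1 k"
    using ar1 ar2 ar3 ar4 by (simp only: comb_def coeff_add coeff_mc coeff_cub if_False) simp
  show "coeff (comb p0 p1 p2) (3*k+2) = coeff p2 k"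
    using ar1 ar2 ar3 ar4 by (simp only: comb_def coeff_add coeff_mc coeff_cub if_False) simp
qed

lemma comb_inj: assumes "comb p0 p1 p2 = comb q0 q1 q2"
  shows "p0 = q0 \<and> p1 = q1 \<and> p2 = q2"
  using coeff_comb[of p0 p1 p2] coeff_comb[of q0 q1 q2] assms
  by (auto intro!: poly_eqI)

lemma cub_add: "cub (p + q) = cub p + cub q" by (simp add: cub_def pcompose_add)
lemma cub_smult: "cub (smult c p) = smult c (cub p)" by (simp add: cub_def pcompose_smult)
lemma cub_x: "cub (monom 1 1 * p) = monom 1 3 * cub p"
  by (simp add: cub_def pcompose_mult monom_altdef pcompose_pCons)
lemma cub_x': "cub (p * monom 1 1) = cub p * monom 1 3"
  using cub_x[of p] by (simp add: mult.commute)
lemma pderiv_cub: "pderiv (cub p) = monom 1 2 * cub (smult 3 (pderiv p))"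
  by (simp add: cub_def pderiv_pcompose pderiv_monom cub_smult[unfolded cub_def] mult_ac smult_monom)
    (simp add: monom_altdef)

lemma mm: "monom (1::complex) a * (monom 1 b * p) = monom 1 (a+b) * p"
  by (simp add: mult.assoc[symmetric] mult_monom)

lemma pderiv_x: "pderiv (monom (1::complex) 1 * f) = f + monom 1 1 * pderiv f"
  by (simp add: pderiv_mult pderiv_monom)
lemma pderiv_x2: "pderiv (monom (1::complex) 2 * f) = smult 2 (monom 1 1 * f) + monom 1 2 * pderiv f"
proof -
  have e: "pderiv (monom (1::complex) 2) = smult 2 (monom 1 1)" by (simp add: pderiv_monom smult_monom)
  show ?thesis by (simp only: pderiv_mult e mult_smult_left mult_smult_right mult.commute add.commute)
qed
lemma mm12: "monom (1::complex) 1 * (monom 1 2 * p) = monom 1 3 * p"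
proof -
  have e: "(1::nat)+2 = 3" by simp
  show ?thesis by (simp only: mm e)
qed
lemma mm22: "monom (1::complex) 2 * (monom 1 2 * p) = monom 1 1 * (monom 1 3 * p)"
proof -
  have e: "(2::nat)+2 = 1+3" by simp
  show ?thesis by (simp only: mm e)
qed

lemma pderiv_comb: "pderiv (comb p0 p1 p2) = comb (opA p1) (opB p2) (smult 3 (pderiv p0))"
proof -
  have "pderiv (monom 1 1 * cub p1) = cub p1 + monom 1 1 * (monom 1 2 * cub (smult 3 (pderiv p1)))"
    by (simp only: pderiv_x pderiv_cub)
  also have "\<dots> = cub p1 + monom 1 3 * cub (smult 3 (pderiv p1))" by (simp only: mm12)
  also have "\<dots> = cub (opA p1)"
    by (simp only: opA_def theta_def cub_add cub_smult cub_x mult_smult_right)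
  finally have 1: "pderiv (monom 1 1 * cub p1) = cub (opA p1)" .
  have "pderiv (monom 1 2 * cub p2) = smult 2 (monom 1 1 * cub p2) + monom 1 2 * (monom 1 2 * cub (smult 3 (pderiv p2)))"
    by (simp only: pderiv_x2 pderiv_cub)
  also have "\<dots> = smult 2 (monom 1 1 * cub p2) + monom 1 1 * (monom 1 3 * cub (smult 3 (pderiv p2)))"
    by (simp only: mm22)
  also have "\<dots> = monom 1 1 * cub (opB p2)"
    by (simp only: opB_def theta_def cub_add cub_smult cub_x mult_smult_right distrib_left mult_smult_right)
  finally have 2: "pderiv (monom 1 2 * cub p2) = monom 1 1 * cub (opB p2)" .
  show ?thesis
    by (simp only: comb_def pderiv_add 1 2 pderiv_cub) (simp add: algebra_simps)
qed

lemma opA_smult: "opA (smult c p) = smult c (opA p)"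
  by (simp add: opA_def theta_def pderiv_smult smult_add_right mult_smult_right smult_smult mult.commute)
lemma opB_smult: "opB (smult c p) = smult c (opB p)"
  by (simp add: opB_def theta_def pderiv_smult smult_add_right mult_smult_right smult_smult mult.commute)

lemma d3: "pderiv (pderiv (pderiv (comb p0 p1 p2))) =
   comb (smult 3 (O120 p0)) (smult 3 (O201 p1)) (smult 3 (O012 p2))"
  by (simp only: pderiv_comb O120_def O201_def O012_def opA_smult opB_smult pderiv_smult)

lemma comb_smult: "smult c (comb a b d) = comb (smult c a) (smult c b) (smult c d)"
  by (simp add: comb_def cub_smult smult_add_right mult_smult_right)

lemma app3: assumes "Appell W"
  shows "pderiv (pderiv (pderiv (W (k+3)))) = smult (of_nat ((k+3)*(k+2)*(k+1))) (W k)"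
proof -
  have A: "\<And>m. pderiv (W (Suc m)) = smult (of_nat (Suc m)) (W m)"
    using assms by (simp add: Appell_def)
  have e: "k+3 = Suc (Suc (Suc k))" by arith
  have "pderiv (pderiv (pderiv (W (k+3)))) = smult (of_nat (Suc (Suc (Suc k))) * of_nat (Suc (Suc k)) * of_nat (Suc k)) (W k)"
    by (simp only: e A pderiv_smult smult_smult)
  also have "of_nat (Suc (Suc (Suc k))) * of_nat (Suc (Suc k)) * of_nat (Suc k) = (of_nat ((k+3)*(k+2)*(k+1)) :: complex)"
    by (simp only: e of_nat_mult) simp
  finally show ?thesis .
qed

lemma key:
  assumes "Appell W" "W (k+3) = comb p0 p1 p2" "W k = comb q0 q1 q2"
    "(k+3)*(k+2)*(k+1) = 3*d"
  shows "q0 = smult (inverse (of_nat d)) (O120 p0) \<and> q1 = smult (inverse (of_nat d)) (O201 p1)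
    \<and> q2 = smult (inverse (of_nat d)) (O012 p2)"
proof -
  have "comb (smult 3 (O120 p0)) (smult 3 (O201 p1)) (smult 3 (O012 p2))
      = comb (smult (of_nat (3*d)) q0) (smult (of_nat (3*d)) q1) (smult (of_nat (3*d)) q2)" (is "?L = ?R")
    using app3[OF assms(1), of k] by (simp only: assms(2,3,4) d3 comb_smult)
  note cc = comb_inj[OF this]
  have e: "smult 3 (O120 p0) = smult (3 * of_nat d) q0" "smult 3 (O201 p1) = smult (3 * of_nat d) q1"
     "smult 3 (O012 p2) = smult (3 * of_nat d) q2"
    using cc by (simp_all only: of_nat_mult) simp_all
  have d: "d \<noteq> 0" using assms(4) by auto
  have "\<And>X q :: complex poly. smult 3 X = smult (3 * of_nat d) q \<Longrightarrow> q = smult (inverse (of_nat d)) X"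
  proof -
    fix X q assume h: "smult 3 X = smult (3 * of_nat d) (q::complex poly)"
    have "smult (inverse (3 * of_nat d)) (smult 3 X) = q" unfolding h using d by simp
    then show "q = smult (inverse (of_nat d)) X" by (simp add: smult_smult)
  qed
  then show ?thesis using e by blast
qed

theorem proposition7:
  fixes W P Q R a1 a2 b1 b2 c1 c2 :: "nat \<Rightarrow> complex poly" and n :: nat
  assumes "Appell W"
    and "cubic_decomp W P Q R a1 a2 b1 b2 c1 c2"
    and "n \<ge> 1"
  shows "(a2 (n-1) = smult (inverse (of_nat ((n+1)*(3*n+1)*(3*n+2)))) (O012 (a2 n))) \<and>
    (b2 (n-1) = smult (inverse (of_nat ((n+1)*(3*n+2)*(3*n+4)))) (O012 (b2 n))) \<and>
    (R n = smult (inverse (of_nat ((n+1)*(3*n+4)*(3*n+5)))) (O012 (R (n+1)))) \<and>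
    (a1 (n-1) = smult (inverse (of_nat ((n+1)*(3*n+1)*(3*n+2)))) (O201 (a1 n))) \<and>
    (Q n = smult (inverse (of_nat ((n+1)*(3*n+2)*(3*n+4)))) (O201 (Q (n+1)))) \<and>
    (c2 (n-1) = smult (inverse (of_nat (n*(3*n+1)*(3*n+2)))) (O201 (c2 n))) \<and>
    (P n = smult (inverse (of_nat ((n+1)*(3*n+1)*(3*n+2)))) (O120 (P (n+1)))) \<and>
    (b1 (n-1) = smult (inverse (of_nat (n*(3*n-1)*(3*n+1)))) (O120 (b1 n))) \<and>
    (c1 (n-1) = smult (inverse (of_nat (n*(3*n+1)*(3*n+2)))) (O120 (c1 n)))"
proof -
  have Ap: "Appell W" by fact
  have cd: "cubic_decomp W P Q R a1 a2 b1 b2 c1 c2" by fact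
  have W0: "\<And>m. m \<ge> 1 \<Longrightarrow> W (3*m) = comb (P m) (a1 (m-1)) (a2 (m-1))"
    using cd unfolding cubic_decomp_def comb_def by auto
  have W1: "\<And>m. W (3*m+1) = comb (b1 m) (Q m) (if m = 0 then 0 else b2 (m-1))"
  proof -
    fix m show "W (3*m+1) = comb (b1 m) (Q m) (if m = 0 then 0 else b2 (m-1))"
      using cd unfolding cubic_decomp_def comb_def by (cases "m = 0") (auto simp: cub_def)
  qed
  have W2: "\<And>m. W (3*m+2) = comb (c1 m) (c2 m) (R m)"
    using cd unfolding cubic_decomp_def comb_def by auto
  obtain m where n: "n = Suc m" using assms(3) by (cases n) auto
  have k1: "P n = smult (inverse (of_nat ((n+1)*(3*n+1)*(3*n+2)))) (O120 (P (n+1))) \<and>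
     a1 (n-1) = smult (inverse (of_nat ((n+1)*(3*n+1)*(3*n+2)))) (O201 (a1 n)) \<and>
     a2 (n-1) = smult (inverse (of_nat ((n+1)*(3*n+1)*(3*n+2)))) (O012 (a2 n))"
  proof (rule key[OF Ap])
    have "W (3*(n+1)) = comb (P (n+1)) (a1 n) (a2 n)" using W0[of "n+1"] by simp
    moreover have "3*(n+1) = 3*n+3" by simp
    ultimately show "W (3*n+3) = comb (P (n+1)) (a1 n) (a2 n)" by metis
    show "W (3*n) = comb (P n) (a1 (n-1)) (a2 (n-1))" using W0 assms(3) by blast
    show "(3*n+3)*(3*n+2)*(3*n+1) = 3*((n+1)*(3*n+1)*(3*n+2))" by (simp add: algebra_simps)
  qed
  have k2: "b1 n = smult (inverse (of_nat ((n+1)*(3*n+2)*(3*n+4)))) (O120 (b1 (n+1))) \<and>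
     Q n = smult (inverse (of_nat ((n+1)*(3*n+2)*(3*n+4)))) (O201 (Q (n+1))) \<and>
     b2 (n-1) = smult (inverse (of_nat ((n+1)*(3*n+2)*(3*n+4)))) (O012 (b2 n))"
  proof (rule key[OF Ap])
    have "W (3*(n+1)+1) = comb (b1 (n+1)) (Q (n+1)) (b2 n)" using W1[of "n+1"] by simp
    moreover have "3*(n+1)+1 = 3*n+1+3" by simp
    ultimately show "W (3*n+1+3) = comb (b1 (n+1)) (Q (n+1)) (b2 n)" by metis
    show "W (3*n+1) = comb (b1 n) (Q n) (b2 (n-1))" using W1[of n] assms(3) by simp
    show "(3*n+1+3)*(3*n+1+2)*(3*n+1+1) = 3*((n+1)*(3*n+2)*(3*n+4))" by (simp add: algebra_simps)
  qed
  have k3: "b1 m = smult (inverse (of_nat (n*(3*n-1)*(3*n+1)))) (O120 (b1 n)) \<and>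
     Q m = smult (inverse (of_nat (n*(3*n-1)*(3*n+1)))) (O201 (Q n)) \<and>
     (if m = 0 then 0 else b2 (m-1)) = smult (inverse (of_nat (n*(3*n-1)*(3*n+1)))) (O012 (b2 (n-1)))"
  proof (rule key[OF Ap])
    have "W (3*n+1) = comb (b1 n) (Q n) (b2 (n-1))" using W1[of n] assms(3) by simp
    moreover have "3*n+1 = 3*m+1+3" using n by simp
    ultimately show "W (3*m+1+3) = comb (b1 n) (Q n) (b2 (n-1))" by metis
    show "W (3*m+1) = comb (b1 m) (Q m) (if m = 0 then 0 else b2 (m-1))" using W1[of m] by simp
    show "(3*m+1+3)*(3*m+1+2)*(3*m+1+1) = 3*(n*(3*n-1)*(3*n+1))" using n by (simp add: algebra_simps)
  qed
  have k4: "c1 m = smult (inverse (of_nat (n*(3*n+1)*(3*n+2)))) (O120 (c1 n)) \<and>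
     c2 m = smult (inverse (of_nat (n*(3*n+1)*(3*n+2)))) (O201 (c2 n)) \<and>
     R m = smult (inverse (of_nat (n*(3*n+1)*(3*n+2)))) (O012 (R n))"
  proof (rule key[OF Ap])
    have "W (3*n+2) = comb (c1 n) (c2 n) (R n)" using W2[of n] by simp
    moreover have "3*n+2 = 3*m+2+3" using n by simp
    ultimately show "W (3*m+2+3) = comb (c1 n) (c2 n) (R n)" by metis
    show "W (3*m+2) = comb (c1 m) (c2 m) (R m)" using W2[of m] by simp
    show "(3*m+2+3)*(3*m+2+2)*(3*m+2+1) = 3*(n*(3*n+1)*(3*n+2))" using n by (simp add: algebra_simps)
  qed
  have k5: "c1 n = smult (inverse (of_nat ((n+1)*(3*n+4)*(3*n+5)))) (O120 (c1 (n+1))) \<and>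
     c2 n = smult (inverse (of_nat ((n+1)*(3*n+4)*(3*n+5)))) (O201 (c2 (n+1))) \<and>
     R n = smult (inverse (of_nat ((n+1)*(3*n+4)*(3*n+5)))) (O012 (R (n+1)))"
  proof (rule key[OF Ap])
    have "W (3*(n+1)+2) = comb (c1 (n+1)) (c2 (n+1)) (R (n+1))" using W2[of "n+1"] by simp
    moreover have "3*(n+1)+2 = 3*n+2+3" by simp
    ultimately show "W (3*n+2+3) = comb (c1 (n+1)) (c2 (n+1)) (R (n+1))" by metis
    show "W (3*n+2) = comb (c1 n) (c2 n) (R n)" using W2[of n] by simp
    show "(3*n+2+3)*(3*n+2+2)*(3*n+2+1) = 3*((n+1)*(3*n+4)*(3*n+5))" by (simp add: algebra_simps)
  qed
  have mm1: "m = n - 1" using n by simp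
  show ?thesis using k1 k2 k3 k4 k5 unfolding mm1 by blast
qed

end
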